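(* Let $c_0,\dots,c_{N-1}$ be the vertices of a convex polygonal arc in the plane, let $L_i=\tfrac12(c_{i+1}-c_i)$ for $0\le i\le N-2$, and assume $[L_i,L_j]>0$ whenever $i<j$. For $0\le i\le j\le N-1$ define $$p(i,j)=\frac{c_i+c_j}{2},\qquad f(i,j)=\sum_{i\le k<l\le j-1}[L_k,L_l],\qquad q(i,j)=(p(i,j),f(i,j))\in\mathbb{R}^3.$$ Then $q$ is a discrete indefinite improper affine sphere, that is: (1) for all $1\le i<j\le N-2$ the five points $q(i,j),q(i+1,j),q(i-1,j),q(i,j-1),q(i,j+1)$ are coplanar; and (2) there is a fixed direction $\xi\in\mathbb{R}^3$ such that for all $0\le i<j\le N-2$ the vector $q(i,j)+q(i+1,j+1)-q(i+1,j)-q(i,j+1)$ is parallel to $\xi$.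
   Context: $[X,Y]$ denotes the determinant of the $2\times 2$ matrix with columns $X,Y$. A map $q:\mathbb{Z}^2\to\mathbb{R}^3$ is called a discrete indefinite improper affine sphere if (i) for each $(i,j)$ the points $q(i,j),q(i\pm1,j),q(i,j\pm1)$ are coplanar and (ii) there is a direction $\xi$ such that every $q(i,j)+q(i+1,j+1)-q(i+1,j)-q(i,j+1)$ is parallel to $\xi$. *)

theory Defs
  imports "HOL-Analysis.Analysis"
begin

definition det2 :: "real^2 \<Rightarrow> real^2 \<Rightarrow> real" where
  "det2 X Y = X$1 * Y$2 - X$2 * Y$1"

definition Ledge :: "(nat \<Rightarrow> real^2) \<Rightarrow> nat \<Rightarrow> real^2" where
  "Ledge c i = (1/2) *\<^sub>R (c (Suc i) - c i)"

definition pmid :: "(nat \<Rightarrow> real^2) \<Rightarrow> nat \<Rightarrow> nat \<Rightarrow> real^2" where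
  "pmid c i j = (1/2) *\<^sub>R (c i + c j)"

definition fheight :: "(nat \<Rightarrow> real^2) \<Rightarrow> nat \<Rightarrow> nat \<Rightarrow> real" where
  "fheight c i j = (\<Sum>k\<in>{i..<j}. \<Sum>l\<in>{Suc k..<j}. det2 (Ledge c k) (Ledge c l))"

definition qmap :: "(nat \<Rightarrow> real^2) \<Rightarrow> nat \<Rightarrow> nat \<Rightarrow> real^3" where
  "qmap c i j = vector [pmid c i j $ 1, pmid c i j $ 2, fheight c i j]"

end

theory Submission
  imports Defs
begin

lemma Tsum:
  assumes "a \<le> b"
  shows "(\<Sum>l\<in>{a..<b}. Ledge c l $ m) = (c b $ m - c a $ m)/2"
proof -
  have "(\<Sum>l\<in>{a..<b}. Ledge c l $ m) = (\<Sum>l\<in>{a..<b}. (c (Suc l) $ m - c l $ m)/2)"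
    by (simp add: Ledge_def)
  also have "\<dots> = (\<Sum>l\<in>{a..<b}. c (Suc l) $ m - c l $ m)/2"
    by (simp add: sum_divide_distrib)
  also have "\<dots> = (c b $ m - c a $ m)/2" using sum_Suc_diff'[OF assms, of "\<lambda>l. c l $ m"] by simp
  finally show ?thesis .
qed

lemma det_sum_right:
  "(\<Sum>l\<in>A. det2 X (Ledge c l)) = X$1 * (\<Sum>l\<in>A. Ledge c l $ 2) - X$2 * (\<Sum>l\<in>A. Ledge c l $ 1)"
  by (simp add: det2_def sum_subtractf sum_distrib_left)

lemma det_sum_left:
  "(\<Sum>l\<in>A. det2 (Ledge c l) X) = (\<Sum>l\<in>A. Ledge c l $ 1) * X$2 - (\<Sum>l\<in>A. Ledge c l $ 2) * X$1"
  by (simp add: det2_def sum_subtractf sum_distrib_right)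

lemma fA:
  assumes "i \<le> j"
  shows "fheight c i (Suc j) = fheight c i j + (\<Sum>k\<in>{i..<j}. det2 (Ledge c k) (Ledge c j))"
proof -
  have "fheight c i (Suc j) = (\<Sum>k\<in>{i..<j}. \<Sum>l\<in>{Suc k..<Suc j}. det2 (Ledge c k) (Ledge c l))"
    unfolding fheight_def using assms by (simp add: sum.atLeastLessThan_Suc)
  also have "\<dots> = (\<Sum>k\<in>{i..<j}. (\<Sum>l\<in>{Suc k..<j}. det2 (Ledge c k) (Ledge c l)) + det2 (Ledge c k) (Ledge c j))"
    by (intro sum.cong refl) (simp add: sum.atLeastLessThan_Suc)
  finally show ?thesis unfolding fheight_def by (simp add: sum.distrib)
qed

lemma fB:
  assumes "i < j"
  shows "fheight c i j = (\<Sum>l\<in>{Suc i..<j}. det2 (Ledge c i) (Ledge c l)) + fheight c (Suc i) j"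
  unfolding fheight_def using assms by (simp add: sum.atLeast_Suc_lessThan)

lemma plane_mem:
  fixes q0 P :: "real^3"
  assumes "P$3 - q0$3 = S1*(P$2-q0$2) - S2*(P$1-q0$1)"
  shows "P \<in> affine hull {q0, q0 + vector[1,0,-S2], q0 + vector[0,1,S1]}"
  unfolding affine_hull_3
  apply (rule CollectI)
  apply (rule exI[of _ "1 - (P$1-q0$1) - (P$2-q0$2)"])
  apply (rule exI[of _ "P$1-q0$1"])
  apply (rule exI[of _ "P$2-q0$2"])
  using assms by (simp add: vec_eq_iff forall_3 vector_3 algebra_simps)

lemma q1: "qmap c i j $ 1 = (c i $ 1 + c j $ 1)/2"
  by (simp add: qmap_def vector_3 pmid_def)
lemma q2: "qmap c i j $ 2 = (c i $ 2 + c j $ 2)/2"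
  by (simp add: qmap_def vector_3 pmid_def)
lemma q3: "qmap c i j $ 3 = fheight c i j"
  by (simp add: qmap_def vector_3)

theorem mainTheorem5:
  fixes c :: "nat \<Rightarrow> real^2" and N :: nat
  assumes pos: "\<And>i j. i < j \<Longrightarrow> j \<le> N - 2 \<Longrightarrow> det2 (Ledge c i) (Ledge c j) > 0"
  shows "(\<forall>i j. 1 \<le> i \<and> i < j \<and> j \<le> N - 2 \<longrightarrow>
            coplanar {qmap c i j, qmap c (i+1) j, qmap c (i-1) j, qmap c i (j-1), qmap c i (j+1)})
       \<and> (\<exists>\<xi>::real^3. \<xi> \<noteq> 0 \<and>
            (\<forall>i j. i < j \<and> j \<le> N - 2 \<longrightarrow>
               (\<exists>t::real. qmap c i j + qmap c (i+1) (j+1) - qmap c (i+1) j - qmap c i (j+1) = t *\<^sub>R \<xi>)))"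
proof
  show "\<forall>i j. 1 \<le> i \<and> i < j \<and> j \<le> N - 2 \<longrightarrow>
            coplanar {qmap c i j, qmap c (i+1) j, qmap c (i-1) j, qmap c i (j-1), qmap c i (j+1)}"
  proof (intro allI impI)
    fix i j assume h: "1 \<le> i \<and> i < j \<and> j \<le> N - 2"
    then obtain i' where i': "i = Suc i'" by (cases i) auto
    from h obtain j' where j': "j = Suc j'" by (cases j) auto
    define S1 where "S1 = (c j $ 1 - c i $ 1)/2"
    define S2 where "S2 = (c j $ 2 - c i $ 2)/2"
    define q0 where "q0 = qmap c i j"
    have mem: "\<And>P. P$3 - q0$3 = S1*(P$2-q0$2) - S2*(P$1-q0$1) \<Longrightarrow>
       P \<in> affine hull {q0, q0 + vector[1,0,-S2], q0 + vector[0,1,S1]}"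
      by (rule plane_mem)
    have e1: "qmap c (i+1) j \<in> affine hull {q0, q0 + vector[1,0,-S2], q0 + vector[0,1,S1]}"
    proof (rule mem)
      have "fheight c i j = (\<Sum>l\<in>{Suc i..<j}. det2 (Ledge c i) (Ledge c l)) + fheight c (Suc i) j"
        using h by (intro fB) auto
      moreover have "Suc i \<le> j" using h by auto
      ultimately have F: "fheight c i j = Ledge c i $1 * ((c j $ 2 - c (Suc i) $ 2)/2) - Ledge c i $2 * ((c j $ 1 - c (Suc i) $ 1)/2) + fheight c (Suc i) j"
        by (simp add: det_sum_right Tsum)
      show "qmap c (i+1) j $ 3 - q0$3 = S1*(qmap c (i+1) j $2-q0$2) - S2*(qmap c (i+1) j $1-q0$1)"
        unfolding q0_def q1 q2 q3 S1_def S2_def F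
        by (simp add: Ledge_def field_simps) (simp add: algebra_simps)?
    qed
    have e2: "qmap c (i-1) j \<in> affine hull {q0, q0 + vector[1,0,-S2], q0 + vector[0,1,S1]}"
    proof (rule mem)
      have "fheight c i' j = (\<Sum>l\<in>{Suc i'..<j}. det2 (Ledge c i') (Ledge c l)) + fheight c (Suc i') j"
        using h i' by (intro fB) auto
      moreover have "Suc i' \<le> j" using h i' by auto
      ultimately have F: "fheight c i' j = Ledge c i' $1 * ((c j $ 2 - c (Suc i') $ 2)/2) - Ledge c i' $2 * ((c j $ 1 - c (Suc i') $ 1)/2) + fheight c (Suc i') j"
        by (simp add: det_sum_right Tsum)
      show "qmap c (i-1) j $ 3 - q0$3 = S1*(qmap c (i-1) j $2-q0$2) - S2*(qmap c (i-1) j $1-q0$1)"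
        unfolding q0_def q1 q2 q3 S1_def S2_def i' diff_Suc_1 F
        by (simp add: Ledge_def field_simps) (simp add: algebra_simps)?
    qed
    have e3: "qmap c i (j+1) \<in> affine hull {q0, q0 + vector[1,0,-S2], q0 + vector[0,1,S1]}"
    proof (rule mem)
      have "fheight c i (Suc j) = fheight c i j + (\<Sum>k\<in>{i..<j}. det2 (Ledge c k) (Ledge c j))"
        using h by (intro fA) auto
      moreover have "i \<le> j" using h by auto
      ultimately have F: "fheight c i (Suc j) = fheight c i j + ((c j $ 1 - c i $ 1)/2) * Ledge c j $2 - ((c j $ 2 - c i $ 2)/2) * Ledge c j $1"
        by (simp add: det_sum_left Tsum)
      show "qmap c i (j+1) $ 3 - q0$3 = S1*(qmap c i (j+1) $2-q0$2) - S2*(qmap c i (j+1) $1-q0$1)"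
        unfolding q0_def q1 q2 q3 S1_def S2_def Suc_eq_plus1[symmetric] F
        by (simp add: Ledge_def field_simps) (simp add: algebra_simps)?
    qed
    have e4: "qmap c i (j-1) \<in> affine hull {q0, q0 + vector[1,0,-S2], q0 + vector[0,1,S1]}"
    proof (rule mem)
      have "fheight c i (Suc j') = fheight c i j' + (\<Sum>k\<in>{i..<j'}. det2 (Ledge c k) (Ledge c j'))"
        using h j' by (intro fA) auto
      moreover have "i \<le> j'" using h j' by auto
      ultimately have F: "fheight c i (Suc j') = fheight c i j' + ((c j' $ 1 - c i $ 1)/2) * Ledge c j' $2 - ((c j' $ 2 - c i $ 2)/2) * Ledge c j' $1"
        by (simp add: det_sum_left Tsum)
      show "qmap c i (j-1) $ 3 - q0$3 = S1*(qmap c i (j-1) $2-q0$2) - S2*(qmap c i (j-1) $1-q0$1)"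
        unfolding q0_def q1 q2 q3 S1_def S2_def j' diff_Suc_1 F
        by (simp add: Ledge_def field_simps) (simp add: algebra_simps)?
    qed
    have e0: "q0 \<in> affine hull {q0, q0 + vector[1,0,-S2], q0 + vector[0,1,S1]}"
      by (simp add: hull_inc)
    show "coplanar {qmap c i j, qmap c (i+1) j, qmap c (i-1) j, qmap c i (j-1), qmap c i (j+1)}"
      unfolding coplanar_def
      using e0 e1 e2 e3 e4 unfolding q0_def by blast
  qed
next
  show "\<exists>\<xi>::real^3. \<xi> \<noteq> 0 \<and>
            (\<forall>i j. i < j \<and> j \<le> N - 2 \<longrightarrow>
               (\<exists>t::real. qmap c i j + qmap c (i+1) (j+1) - qmap c (i+1) j - qmap c i (j+1) = t *\<^sub>R \<xi>))"
  proof (rule exI[of _ "vector [0,0,1]"], rule conjI)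
    show "(vector [0,0,1] :: real^3) \<noteq> 0" by (simp add: vec_eq_iff forall_3 vector_3)
  next
    show "\<forall>i j. i < j \<and> j \<le> N - 2 \<longrightarrow>
               (\<exists>t::real. qmap c i j + qmap c (i+1) (j+1) - qmap c (i+1) j - qmap c i (j+1) = t *\<^sub>R vector [0,0,1])"
    proof (intro allI impI)
    fix i j assume h: "i < j \<and> j \<le> N - 2"
    have a: "fheight c i (Suc j) = fheight c i j + (\<Sum>k\<in>{i..<j}. det2 (Ledge c k) (Ledge c j))"
      using h by (intro fA) auto
    have b: "fheight c (Suc i) (Suc j) = fheight c (Suc i) j + (\<Sum>k\<in>{Suc i..<j}. det2 (Ledge c k) (Ledge c j))"
      using h by (intro fA) auto
    have s: "(\<Sum>k\<in>{i..<j}. det2 (Ledge c k) (Ledge c j)) = det2 (Ledge c i) (Ledge c j) + (\<Sum>k\<in>{Suc i..<j}. det2 (Ledge c k) (Ledge c j))"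
      using h by (simp add: sum.atLeast_Suc_lessThan)
    show "\<exists>t::real. qmap c i j + qmap c (i+1) (j+1) - qmap c (i+1) j - qmap c i (j+1) = t *\<^sub>R vector [0,0,1]"
      apply (rule exI[of _ "- det2 (Ledge c i) (Ledge c j)"])
      using a b s unfolding vec_eq_iff forall_3
      by (simp add: vector_3 q1 q2 q3 algebra_simps add_divide_distrib)
    qed
  qed
qed

end
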